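(* Let $\omega:[I^-,I^+]\to\mathbb{R}$ be $C^1$ with $\omega'(I)>0$ for all $I\in[I^-,I^+]$, let $T(I,\theta)=(I,\theta+\omega(I))$ on $[I^-,I^+]\times\mathbb{T}$, and let $T_\epsilon:[I^-,I^+]\times\mathbb{T}\to\mathbb{R}\times\mathbb{T}$ be a family of maps with $\|T_\epsilon-T\|_{C^1}\le C\epsilon$ for a constant $C$ independent of $\epsilon$. Let $\gamma_1=\{(I,f(I)):I\in(I_1,I_2)\}$ and $\gamma_2=\{(I,g(I)):I\in(I_1,I_2)\}$ be $C^1$ graphs over the same interval $(I_1,I_2)\subset[I^-,I^+]$, let $x_1\in\gamma_1$ and $\delta>0$. Then there exist $\epsilon_0>0$, $N\in\mathbb{N}$, $x_2\in\gamma_2$ and $\delta'>0$ such that for all $\epsilon\in(0,\epsilon_0)$, $T_\epsilon^N(B_\delta(x_1))\supset B_{\delta'}(x_2)$ (where $T_\epsilon^N$ is well defined on $B_\delta(x_1)$).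
   Context: $\mathbb{T}=\mathbb{R}/\mathbb{Z}$; $B_r(x)$ denotes the open ball of radius $r$ centred at $x$. *)

theory Defs
  imports "HOL-Analysis.Analysis"
begin

text \<open>Points of the cylinder \<open>\<real> \<times> \<T>\<close> (with \<open>\<T> = \<real>/\<int>\<close>) are represented by
  pairs \<open>(I, \<theta>) :: real \<times> real\<close>, the angle being read modulo 1.
  Maps of the cylinder are represented by their (degree one) lifts to \<open>\<real>\<^sup>2\<close>.\<close>

definition cyl_eq :: "real \<times> real \<Rightarrow> real \<times> real \<Rightarrow> bool" where
  "cyl_eq p q \<longleftrightarrow> fst p = fst q \<and> snd p - snd q \<in> \<int>"

definition cyl_dist :: "real \<times> real \<Rightarrow> real \<times> real \<Rightarrow> real" where
  "cyl_dist p q = (INF k::int. dist p (fst q, snd q + of_int k))"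

definition cyl_ball :: "real \<times> real \<Rightarrow> real \<Rightarrow> (real \<times> real) set" where
  "cyl_ball x r = {y. cyl_dist x y < r}"

definition twist :: "(real \<Rightarrow> real) \<Rightarrow> real \<times> real \<Rightarrow> real \<times> real" where
  "twist \<omega> x = (fst x, snd x + \<omega> (fst x))"

definition twist_deriv :: "(real \<Rightarrow> real) \<Rightarrow> real \<times> real \<Rightarrow> (real \<times> real) \<Rightarrow>\<^sub>L (real \<times> real)" where
  "twist_deriv \<omega>' x = Blinfun (\<lambda>h. (fst h, snd h + \<omega>' (fst x) * fst h))"

end

theory Submission
  imports Defs
begin

lemma twist_pow: "(twist \<omega> ^^ n) y = (fst y, snd y + real n * \<omega> (fst y))"
  by (induction n) (auto simp: twist_def algebra_simps)

lemma cyl_dist_le: "cyl_dist p q \<le> dist p (fst q, snd q + of_int k)"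
  unfolding cyl_dist_def by (rule cINF_lower) (auto intro: bdd_belowI[where m=0])

lemma cyl_ball_ex: assumes "z \<in> cyl_ball x r" shows "\<exists>k::int. dist x (fst z, snd z + of_int k) < r"
proof -
  have "(INF k::int. dist x (fst z, snd z + of_int k)) < r" using assms by (simp add: cyl_ball_def cyl_dist_def)
  then show ?thesis by (subst (asm) cINF_less_iff) (auto intro: bdd_belowI[where m=0])
qed

lemma norm_pair_abs: "norm (x::real, y::real) \<le> \<bar>x\<bar> + \<bar>y\<bar>"
  using norm_Pair_le[of x y] by simp

lemma abs_fst_le: "\<bar>fst (w::real\<times>real)\<bar> \<le> norm w"
  using norm_fst_le[of "fst w" "snd w"] by simp
lemma abs_snd_le: "\<bar>snd (w::real\<times>real)\<bar> \<le> norm w"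
  using norm_snd_le[of "snd w" "fst w"] by simp

lemma twist_lip:
  assumes lip: "\<And>x y. x \<in> {lo..hi} \<Longrightarrow> y \<in> {lo..hi} \<Longrightarrow> \<bar>\<omega> x - \<omega> y\<bar> \<le> M * \<bar>x - y\<bar>"
    and M: "M \<ge> 0" and u: "fst u \<in> {lo..hi}" and v: "fst v \<in> {lo..hi}"
  shows "norm (twist \<omega> u - twist \<omega> v) \<le> (2 + M) * norm (u - v)"
proof -
  have d1: "\<bar>fst u - fst v\<bar> \<le> norm (u - v)" using abs_fst_le[of "u - v"] by simp
  have d2: "\<bar>snd u - snd v\<bar> \<le> norm (u - v)" using abs_snd_le[of "u - v"] by simp
  have "norm (twist \<omega> u - twist \<omega> v) \<le> \<bar>fst u - fst v\<bar> + \<bar>snd u - snd v + (\<omega> (fst u) - \<omega> (fst v))\<bar>"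
    using norm_pair_abs by (simp add: twist_def algebra_simps)
  also have "\<dots> \<le> \<bar>fst u - fst v\<bar> + \<bar>snd u - snd v\<bar> + M * \<bar>fst u - fst v\<bar>"
    using lip[OF u v] by linarith
  also have "M * \<bar>fst u - fst v\<bar> \<le> M * norm (u - v)" using d1 M by (rule mult_left_mono)
  then have "\<bar>fst u - fst v\<bar> + \<bar>snd u - snd v\<bar> + M * \<bar>fst u - fst v\<bar> \<le> (2 + M) * norm (u - v)"
    using d1 d2 by (simp add: algebra_simps)
  finally show ?thesis .
qed


lemma iter_close:
  fixes T :: "real \<times> real \<Rightarrow> real \<times> real"
  assumes Tc: "\<And>x. fst x \<in> {lo..hi} \<Longrightarrow> norm (T x - twist \<omega> x) \<le> e"
    and lip: "\<And>x y. x \<in> {lo..hi} \<Longrightarrow> y \<in> {lo..hi} \<Longrightarrow> \<bar>\<omega> x - \<omega> y\<bar> \<le> M * \<bar>x - y\<bar>"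
    and M: "M \<ge> 0" and e: "e \<ge> 0"
    and y: "fst y \<in> {lo+r..hi-r}"
    and small: "e * real N * (2 + M) ^ N \<le> r"
  shows "k \<le> N \<Longrightarrow> norm ((T ^^ k) y - (twist \<omega> ^^ k) y) \<le> e * real k * (2 + M) ^ k
          \<and> fst ((T ^^ k) y) \<in> {lo..hi}"
proof (induction k)
  case 0
  have "0 \<le> e * real N * (2 + M) ^ N" using e M by simp
  then have "r \<ge> 0" using small by linarith
  then show ?case using y by auto
next
  case (Suc k)
  let ?L = "2 + M"
  have L1: "?L \<ge> 1" using M by simp
  define u where "u = (T ^^ k) y"
  define v where "v = (twist \<omega> ^^ k) y"
  have IH: "norm (u - v) \<le> e * real k * ?L ^ k" using Suc by (simp add: u_def v_def)
  have fv: "fst v = fst y" by (simp add: v_def twist_pow)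
  have "e * real k * ?L ^ k \<le> e * real N * ?L ^ N"
    using Suc.prems e L1 by (intro mult_mono mult_left_mono power_increasing) auto
  then have "\<bar>fst u - fst y\<bar> \<le> r" using IH small abs_fst_le[of "u - v"] fv by simp
  then have fu: "fst u \<in> {lo..hi}" using y by auto
  have "0 \<le> e * real N * (2 + M) ^ N" using e M by simp
  then have r0: "r \<ge> 0" using small by linarith
  have fv': "fst v \<in> {lo..hi}" using fv y r0 by auto
  have "norm (T u - twist \<omega> v) \<le> norm (T u - twist \<omega> u) + norm (twist \<omega> u - twist \<omega> v)"
    by (rule order_trans[OF _ norm_triangle_ineq]) simp
  also have "\<dots> \<le> e + ?L * (e * real k * ?L ^ k)"
  proof -
    have "?L * norm (u - v) \<le> ?L * (e * real k * ?L ^ k)" using IH L1 by (intro mult_left_mono) auto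
    then show ?thesis using Tc[OF fu] twist_lip[OF lip M fu fv'] by linarith
  qed
  also have "\<dots> \<le> e * real (Suc k) * ?L ^ Suc k"
  proof -
    have "1 \<le> ?L ^ Suc k" using L1 by (rule one_le_power)
    then have "e * 1 \<le> e * ?L ^ Suc k" using e by (rule mult_left_mono)
    then have "e \<le> e * ?L ^ Suc k" by simp
    then show ?thesis by (simp add: algebra_simps)
  qed
  finally have n: "norm ((T ^^ Suc k) y - (twist \<omega> ^^ Suc k) y) \<le> e * real (Suc k) * ?L ^ Suc k"
    by (simp add: u_def v_def)
  have "e * real (Suc k) * ?L ^ Suc k \<le> e * real N * ?L ^ N"
    using Suc.prems e L1 by (intro mult_mono mult_left_mono power_increasing) auto
  moreover have fsk: "fst ((twist \<omega> ^^ Suc k) y) = fst y" by (simp only: twist_pow fst_conv)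
  moreover have "\<bar>fst ((T ^^ Suc k) y) - fst ((twist \<omega> ^^ Suc k) y)\<bar> \<le> norm ((T ^^ Suc k) y - (twist \<omega> ^^ Suc k) y)"
    using abs_fst_le[of "(T ^^ Suc k) y - (twist \<omega> ^^ Suc k) y"] by (simp only: fst_diff)
  ultimately have "\<bar>fst ((T ^^ Suc k) y) - fst y\<bar> \<le> r"
    using n small by linarith
  then show ?case using n y by auto
qed


lemma iter_cont:
  fixes T :: "real \<times> real \<Rightarrow> real \<times> real"
  assumes cT: "continuous_on A T" and inA: "\<And>y k. y \<in> S \<Longrightarrow> k < N \<Longrightarrow> (T ^^ k) y \<in> A"
  shows "k \<le> N \<Longrightarrow> continuous_on S (T ^^ k)"
proof (induction k)
  case 0 then show ?case by (simp add: continuous_on_id)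
next
  case (Suc k)
  have "continuous_on S (T \<circ> (T ^^ k))"
    by (rule continuous_on_compose) (use Suc inA in \<open>auto intro: continuous_on_subset[OF cT]\<close>)
  then show ?case by simp
qed

theorem mainTheorem10:
  fixes Im Ip I1 I2 a \<delta> C \<epsilon>1 :: real
    and \<omega> \<omega>' f f' g g' :: "real \<Rightarrow> real"
    and Teps :: "real \<Rightarrow> real \<times> real \<Rightarrow> real \<times> real"
    and DTeps :: "real \<Rightarrow> real \<times> real \<Rightarrow> (real \<times> real) \<Rightarrow>\<^sub>L (real \<times> real)"
  assumes omega_deriv: "\<And>I. I \<in> {Im..Ip} \<Longrightarrow> (\<omega> has_real_derivative \<omega>' I) (at I within {Im..Ip})"
    and omega'_cont: "continuous_on {Im..Ip} \<omega>'"
    and twist_cond: "\<And>I. I \<in> {Im..Ip} \<Longrightarrow> \<omega>' I > 0"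
    and eps1_pos: "\<epsilon>1 > 0"
    and T_periodic: "\<And>\<epsilon> I \<theta>. \<epsilon> \<in> {0<..<\<epsilon>1} \<Longrightarrow> I \<in> {Im..Ip} \<Longrightarrow>
                       Teps \<epsilon> (I, \<theta> + 1) = Teps \<epsilon> (I, \<theta>) + (0, 1)"
    and T_deriv: "\<And>\<epsilon> x. \<epsilon> \<in> {0<..<\<epsilon>1} \<Longrightarrow> x \<in> {Im..Ip} \<times> UNIV \<Longrightarrow>
                       (Teps \<epsilon> has_derivative blinfun_apply (DTeps \<epsilon> x)) (at x within {Im..Ip} \<times> UNIV)"
    and T_deriv_cont: "\<And>\<epsilon>. \<epsilon> \<in> {0<..<\<epsilon>1} \<Longrightarrow> continuous_on ({Im..Ip} \<times> UNIV) (DTeps \<epsilon>)"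
    and C0_close: "\<And>\<epsilon> x. \<epsilon> \<in> {0<..<\<epsilon>1} \<Longrightarrow> x \<in> {Im..Ip} \<times> UNIV \<Longrightarrow>
                       norm (Teps \<epsilon> x - twist \<omega> x) \<le> C * \<epsilon>"
    and C1_close: "\<And>\<epsilon> x. \<epsilon> \<in> {0<..<\<epsilon>1} \<Longrightarrow> x \<in> {Im..Ip} \<times> UNIV \<Longrightarrow>
                       norm (DTeps \<epsilon> x - twist_deriv \<omega>' x) \<le> C * \<epsilon>"
    and interval: "{I1<..<I2} \<subseteq> {Im..Ip}"
    and f_deriv: "\<And>I. I \<in> {I1<..<I2} \<Longrightarrow> (f has_real_derivative f' I) (at I)"
    and f'_cont: "continuous_on {I1<..<I2} f'"
    and g_deriv: "\<And>I. I \<in> {I1<..<I2} \<Longrightarrow> (g has_real_derivative g' I) (at I)"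
    and g'_cont: "continuous_on {I1<..<I2} g'"
    and a_in: "a \<in> {I1<..<I2}"
    and delta_pos: "\<delta> > 0"
  shows "\<exists>\<epsilon>0 > 0. \<epsilon>0 \<le> \<epsilon>1 \<and> (\<exists>N::nat. \<exists>b \<in> {I1<..<I2}. \<exists>\<delta>' > 0.
           \<forall>\<epsilon> \<in> {0<..<\<epsilon>0}. \<forall>z \<in> cyl_ball (b, g b) \<delta>'.
             \<exists>y \<in> cyl_ball (a, f a) \<delta>.
               (\<forall>k < N. fst ((Teps \<epsilon> ^^ k) y) \<in> {Im..Ip}) \<and>
               cyl_eq ((Teps \<epsilon> ^^ N) y) z)"
proof -
  define s where "s = min (min ((a - I1)/4) ((I2 - a)/4)) (\<delta>/16)"
  have s0: "s > 0" using a_in delta_pos by (auto simp: s_def)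
  have sd: "s \<le> \<delta>/16" by (simp add: s_def)
  have s1: "s \<le> (a - I1)/4" "s \<le> (I2 - a)/4" unfolding s_def by linarith+
  have Jsub: "(atLeastAtMost (a - 3 * s) (a + 3 * s)) \<subseteq> {I1<..<I2}"
  proof
    fix x assume "x \<in> atLeastAtMost (a - 3 * s) (a + 3 * s)"
    then show "x \<in> {I1<..<I2}" using s1 s0 by auto
  qed
  have Jin: "x \<in> {I1<..<I2}" if "a - 3 * s \<le> x" "x \<le> a + 3 * s" for x
    using that s1 s0 by auto
  have Jstrip: "(atLeastAtMost (a - 3 * s) (a + 3 * s)) \<subseteq> {Im..Ip}" using subset_trans[OF Jsub interval] .
  have openI: "{I1<..<I2} \<subseteq> interior {Im..Ip}" using interval by (intro interior_maximal) auto
  have omega_at: "(\<omega> has_real_derivative \<omega>' I) (at I)" if "I \<in> {I1<..<I2}" for I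
  proof -
    have "I \<in> interior {Im..Ip}" using openI that by auto
    moreover have "I \<in> {Im..Ip}" using interval that by auto
    ultimately show ?thesis using omega_deriv[of I] at_within_interior[of I "{Im..Ip}"] by simp
  qed
  have omega_cont: "continuous_on {Im..Ip} \<omega>"
    using omega_deriv DERIV_continuous continuous_on_eq_continuous_within by blast
  obtain M where M0: "M > 0" and Mb: "\<And>I. I \<in> {Im..Ip} \<Longrightarrow> \<bar>\<omega>' I\<bar> \<le> M"
  proof -
    have "bounded (\<omega>' ` {Im..Ip})"
      by (intro compact_imp_bounded compact_continuous_image omega'_cont compact_Icc)
    then show ?thesis using that unfolding bounded_pos by auto
  qed
  have lip: "\<bar>\<omega> x - \<omega> y\<bar> \<le> M * \<bar>x - y\<bar>" if "x \<in> {Im..Ip}" "y \<in> {Im..Ip}" for x y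
    using field_differentiable_bound[OF convex_real_interval(5) omega_deriv, of M x y] Mb that by auto
  have lipJ: "\<bar>\<omega> x - \<omega> y\<bar> \<le> M * \<bar>x - y\<bar>" if "x \<in> (atLeastAtMost (a - 3 * s) (a + 3 * s))" "y \<in> (atLeastAtMost (a - 3 * s) (a + 3 * s))" for x y
    using lip that Jstrip by blast
  have aS: "a \<in> {Im..Ip}" using a_in interval by auto
  have C0: "C \<ge> 0"
  proof -
    have "norm (Teps (\<epsilon>1/2) (a,0) - twist \<omega> (a,0)) \<le> C * (\<epsilon>1/2)"
      using C0_close[of "\<epsilon>1/2" "(a,0)"] eps1_pos aS by auto
    then have "0 \<le> C * (\<epsilon>1/2)" by (rule order_trans[OF norm_ge_zero])
    then show ?thesis using eps1_pos by (simp add: zero_le_mult_iff)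
  qed
  have Tcont: "continuous_on ({Im..Ip} \<times> UNIV) (Teps \<epsilon>)" if "\<epsilon> \<in> {0<..<\<epsilon>1}" for \<epsilon>
    using has_derivative_continuous_on[of "{Im..Ip} \<times> UNIV" "Teps \<epsilon>" "\<lambda>x. blinfun_apply (DTeps \<epsilon> x)"] T_deriv[OF that] by blast
  have incr: "\<omega> a < \<omega> (a + s)"
  proof (rule DERIV_pos_imp_increasing[of a "a + s" \<omega>])
    show "a < a + s" using s0 by simp
  next
    fix x assume "a \<le> x" "x \<le> a + s"
    then have "x \<in> {I1<..<I2}" using s0 by (intro Jin) auto
    then show "\<exists>y. (\<omega> has_real_derivative y) (at x) \<and> 0 < y"
      using omega_at twist_cond interval by blast
  qed
  define d where "d = \<omega> (a + s) - \<omega> a"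
  have d0: "d > 0" using incr by (simp add: d_def)
  have Ksub: "(atLeastAtMost a (a + s)) \<subseteq> {I1<..<I2}"
  proof
    fix x assume "x \<in> atLeastAtMost a (a + s)"
    then show "x \<in> {I1<..<I2}" using s0 by (intro Jin) auto
  qed
  have gcont: "continuous_on (atLeastAtMost a (a + s)) g"
  proof (intro continuous_at_imp_continuous_on ballI)
    fix x assume "x \<in> atLeastAtMost a (a + s)"
    then have "x \<in> {I1<..<I2}" using Ksub by blast
    then show "isCont g x" using g_deriv DERIV_isCont by blast
  qed
  have wcont: "continuous_on (atLeastAtMost a (a + s)) \<omega>"
    using omega_cont subset_trans[OF Ksub interval] by (rule continuous_on_subset)
  obtain G where Gb: "\<And>x. x \<in> (atLeastAtMost a (a + s)) \<Longrightarrow> \<bar>g x\<bar> \<le> G"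
  proof -
    have "bounded (g ` (atLeastAtMost a (a + s)))"
      by (intro compact_imp_bounded compact_continuous_image gcont compact_Icc)
    then obtain B where "\<forall>x\<in>g ` atLeastAtMost a (a + s). norm x \<le> B" unfolding bounded_pos by blast
    then show ?thesis by (intro that[of B]) auto
  qed
  obtain N :: nat where Nd: "2 * G + 1 < real N * d" using ex_less_of_nat_mult[OF d0] by blast
  define h where "h I = g I - real N * \<omega> I - f a" for I
  have hcont: "continuous_on (atLeastAtMost a (a + s)) h" unfolding h_def using gcont wcont
    by (intro continuous_intros) auto
  define v where "v = \<lfloor>h a\<rfloor>"
  have "h (a + s) \<le> of_int v"
  proof -
    have "h (a+s) = h a + g (a+s) - g a - real N * d" by (simp add: h_def d_def algebra_simps)
    moreover have "\<bar>g (a+s)\<bar> \<le> G" "\<bar>g a\<bar> \<le> G" using Gb s0 by auto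
    moreover have "h a - 1 < of_int v" unfolding v_def by linarith
    ultimately show ?thesis using Nd by linarith
  qed
  moreover have "of_int v \<le> h a" unfolding v_def by simp
  ultimately obtain b where b: "a \<le> b" "b \<le> a + s" "h b = of_int v"
    using IVT2'[OF _ _ _ hcont] s0 by (metis less_add_same_cancel1 less_imp_le)
  have bI: "b \<in> {I1<..<I2}" using b Ksub by auto
  have gb: "g b - real N * \<omega> b = f a + of_int v" using b(3) by (simp add: h_def)
  define L where "L = 2 + M"
  define K where "K = real N * L ^ N"
  define P where "P = 2 + real N * M"
  have P2: "P \<ge> 2" using M0 by (simp add: P_def)
  have K0: "K \<ge> 0" using M0 by (simp add: K_def L_def)
  define \<delta>' where "\<delta>' = min (s/2) (s/(4*P))"
  define \<epsilon>0 where "\<epsilon>0 = min \<epsilon>1 (s/(4*P*(C*K+1)))"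
  have CK1: "C*K+1 > 0" using C0 K0 by (simp add: add_nonneg_pos)
  have d'0: "\<delta>' > 0" using s0 P2 by (simp add: \<delta>'_def)
  have e00: "\<epsilon>0 > 0" using s0 P2 CK1 eps1_pos by (simp add: \<epsilon>0_def)
  define Phinv where "Phinv = twist (\<lambda>I. - (real N * \<omega> I))"
  have Plip: "norm (Phinv p - Phinv q) \<le> P * norm (p - q)" if "fst p \<in> {Im..Ip}" "fst q \<in> {Im..Ip}" for p q
  proof -
    have "\<bar>- (real N * \<omega> x) - - (real N * \<omega> y)\<bar> \<le> (real N * M) * \<bar>x - y\<bar>"
      if "x \<in> {Im..Ip}" "y \<in> {Im..Ip}" for x y
    proof -
      have "\<bar>- (real N * \<omega> x) - - (real N * \<omega> y)\<bar> = real N * \<bar>\<omega> x - \<omega> y\<bar>"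
      proof -
        have "- (real N * \<omega> x) - - (real N * \<omega> y) = real N * (\<omega> y - \<omega> x)" by (simp add: algebra_simps)
        then show ?thesis by (simp add: abs_mult abs_minus_commute)
      qed
      also have "\<dots> \<le> real N * (M * \<bar>x - y\<bar>)" using lip[OF that] by (intro mult_left_mono) auto
      finally show ?thesis by simp
    qed
    from twist_lip[of Im Ip _ "real N * M", OF this _ that] M0 show ?thesis
      by (simp add: Phinv_def P_def)
  qed
  have Pcont: "continuous_on ({Im..Ip} \<times> UNIV) Phinv"
  proof -
    have "continuous_on ({Im..Ip} \<times> UNIV) (\<lambda>p::real\<times>real. \<omega> (fst p))"
      by (rule continuous_on_compose2[OF omega_cont continuous_on_fst]) auto
    then show ?thesis unfolding Phinv_def twist_def by (intro continuous_intros) auto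
  qed
  have e01: "\<epsilon>0 \<le> \<epsilon>1" by (simp add: \<epsilon>0_def)
  have main: "\<forall>\<epsilon> \<in> {0<..<\<epsilon>0}. \<forall>z \<in> cyl_ball (b, g b) \<delta>'.
             \<exists>y \<in> cyl_ball (a, f a) \<delta>.
               (\<forall>k < N. fst ((Teps \<epsilon> ^^ k) y) \<in> {Im..Ip}) \<and>
               cyl_eq ((Teps \<epsilon> ^^ N) y) z"
  proof (intro ballI)
    fix \<epsilon> z assume eps: "\<epsilon> \<in> {0<..<\<epsilon>0}" and z: "z \<in> cyl_ball (b, g b) \<delta>'"
    show "\<exists>y\<in>cyl_ball (a, f a) \<delta>. (\<forall>k<N. fst ((Teps \<epsilon> ^^ k) y) \<in> {Im..Ip}) \<and> cyl_eq ((Teps \<epsilon> ^^ N) y) z"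
    proof -
    have e0: "0 < \<epsilon>" "\<epsilon> < \<epsilon>0" using eps by auto
    have epsI: "\<epsilon> \<in> {0<..<\<epsilon>1}" using eps by (auto simp: \<epsilon>0_def)
    obtain k :: int where zk: "dist (b, g b) (fst z, snd z + of_int k) < \<delta>'" using cyl_ball_ex[OF z] by blast
    define z' where "z' = (fst z, snd z + of_int k)"
    have dz: "dist (b, g b) z' < \<delta>'" using zk by (simp add: z'_def)
    have z1: "\<bar>b - fst z'\<bar> \<le> dist (b, g b) z'" using abs_fst_le[of "(b, g b) - z'"] by (simp add: dist_norm)
    have d's1: "\<delta>' \<le> s/2" by (simp add: \<delta>'_def)
    have "\<delta>' \<le> s/(4*P)" by (simp add: \<delta>'_def)
    then have "P * \<delta>' \<le> P * (s/(4*P))" using P2 by (intro mult_left_mono) auto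
    then have d's2: "P * \<delta>' \<le> s/4" using P2 by simp
    have fz: "a - s/2 \<le> fst z'" "fst z' \<le> a + 3* s/2" using z1 dz d's1 b(1,2) by linarith+
    have Jm: "x \<in> {Im..Ip}" if "a - 3 * s \<le> x" "x \<le> a + 3 * s" for x using Jstrip that by auto
    have z'S: "fst z' \<in> {Im..Ip}" using fz s0 by (intro Jm) auto
    define y0 where "y0 = Phinv z'"
    have fy0: "fst y0 = fst z'" by (simp add: y0_def Phinv_def twist_def)
    define S where "S = cball y0 (s/2)"
    have Sfst: "a - 2 * s \<le> fst y \<and> fst y \<le> a + 2 * s" if "y \<in> S" for y
    proof -
      have "\<bar>fst y0 - fst y\<bar> \<le> dist y0 y" using abs_fst_le[of "y0 - y"] by (simp add: dist_norm)
      moreover have "dist y0 y \<le> s/2" using that by (simp add: S_def)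
      ultimately show ?thesis using fy0 fz by linarith
    qed
    define T where "T = Teps \<epsilon>"
    have CKe0: "C * \<epsilon> * K \<ge> 0" using C0 e0 K0 by simp
    have Qpos: "4*P*(C*K+1) > 0" using P2 CK1 by simp
    have "\<epsilon> < s/(4*P*(C*K+1))" using e0 by (simp add: \<epsilon>0_def)
    then have "\<epsilon> * (4*P*(C*K+1)) < s" using Qpos by (simp add: pos_less_divide_eq)
    moreover have "P * (C * \<epsilon> * K) \<le> P * ((C*K+1) * \<epsilon>)" using P2 e0 by (intro mult_left_mono) (auto simp: algebra_simps)
    ultimately have PCK: "P * (C * \<epsilon> * K) < s/4" by (simp add: algebra_simps)
    have CKs: "C * \<epsilon> * K \<le> s/8"
    proof -
      have "2 * (C * \<epsilon> * K) \<le> P * (C * \<epsilon> * K)" using P2 CKe0 by (intro mult_right_mono) auto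
      then show ?thesis using PCK by linarith
    qed
    have iter: "norm ((T ^^ j) y - (twist \<omega> ^^ j) y) \<le> (C*\<epsilon>) * real j * (2 + M) ^ j
          \<and> fst ((T ^^ j) y) \<in> {a - 3 * s..a + 3 * s}" if "y \<in> S" "j \<le> N" for y j
    proof (rule iter_close[where r = s])
      show "norm (T x - twist \<omega> x) \<le> C * \<epsilon>" if "fst x \<in> {a - 3 * s..a + 3 * s}" for x
      proof -
        have "x \<in> {Im..Ip} \<times> UNIV" using that Jm by (cases x) auto
        then show ?thesis using C0_close[OF epsI] by (simp add: T_def)
      qed
      show "\<bar>\<omega> x - \<omega> y\<bar> \<le> M * \<bar>x - y\<bar>" if "x \<in> {a - 3 * s..a + 3 * s}" "y \<in> {a - 3 * s..a + 3 * s}" for x y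
        using lip Jm that by auto
      show "M \<ge> 0" using M0 by simp
      show "C * \<epsilon> \<ge> 0" using C0 e0 by simp
      show "fst y \<in> {a - 3 * s + s..a + 3 * s - s}" using Sfst[OF \<open>y \<in> S\<close>] by auto
      show "C * \<epsilon> * real N * (2 + M) ^ N \<le> s" using CKs s0 by (simp add: K_def L_def algebra_simps)
      show "j \<le> N" by fact
    qed
    have eb: "norm ((T ^^ N) y - (twist \<omega> ^^ N) y) \<le> C * \<epsilon> * K" if "y \<in> S" for y
      using iter[OF that order_refl] by (simp add: K_def L_def algebra_simps)
    have itS: "fst ((T ^^ j) y) \<in> {Im..Ip}" if "y \<in> S" "j \<le> N" for y j
      using iter[OF that] Jm by auto
    define H where "H y = Phinv (z' - ((T ^^ N) y - (twist \<omega> ^^ N) y))" for y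
    have wS: "fst (z' - ((T ^^ N) y - (twist \<omega> ^^ N) y)) \<in> {Im..Ip}" if "y \<in> S" for y
    proof -
      have "\<bar>fst ((T ^^ N) y - (twist \<omega> ^^ N) y)\<bar> \<le> C * \<epsilon> * K"
        using abs_fst_le[of "(T ^^ N) y - (twist \<omega> ^^ N) y"] eb[OF that] by linarith
      then show ?thesis using fz CKs s0 by (intro Jm) auto
    qed
    have HS: "H y \<in> S" if "y \<in> S" for y
    proof -
      have "norm (H y - y0) \<le> P * norm ((z' - ((T ^^ N) y - (twist \<omega> ^^ N) y)) - z')"
        unfolding H_def y0_def by (rule Plip[OF wS[OF that] z'S])
      also have "\<dots> = P * norm ((T ^^ N) y - (twist \<omega> ^^ N) y)" by (simp add: norm_minus_commute)
      also have "\<dots> \<le> P * (C * \<epsilon> * K)" using eb[OF that] P2 by (intro mult_left_mono) auto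
      finally have "norm (H y - y0) \<le> s/2" using PCK s0 by linarith
      then show ?thesis by (simp add: S_def dist_norm norm_minus_commute)
    qed
    have cT: "continuous_on S (T ^^ N)"
      by (rule iter_cont[of "{Im..Ip} \<times> UNIV" T S N N]) (use Tcont[OF epsI] itS in \<open>auto simp: T_def mem_Times_iff\<close>)
    have cw: "continuous_on S (\<lambda>y. \<omega> (fst y))"
      by (rule continuous_on_compose2[OF omega_cont continuous_on_fst]) (use itS[of _ 0] in auto)
    have cin: "continuous_on S (\<lambda>y. z' - ((T ^^ N) y - (twist \<omega> ^^ N) y))"
      unfolding twist_pow using cT cw by (intro continuous_intros) auto
    have cH: "continuous_on S H"
    proof -
      have "(\<lambda>y. z' - ((T ^^ N) y - (twist \<omega> ^^ N) y)) ` S \<subseteq> {Im..Ip} \<times> UNIV"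
      proof (rule image_subsetI)
        fix y assume "y \<in> S"
        then show "z' - ((T ^^ N) y - (twist \<omega> ^^ N) y) \<in> {Im..Ip} \<times> UNIV"
          unfolding mem_Times_iff using wS by blast
      qed
      then show ?thesis unfolding H_def by (rule continuous_on_compose2[OF Pcont cin])
    qed
    obtain y where yS: "y \<in> S" and Hy: "H y = y"
    proof -
      have SS: "compact S" "convex S" by (simp_all add: S_def)
      have "y0 \<in> S" using s0 by (simp add: S_def)
      then have Sne: "S \<noteq> {}" by blast
      have "H \<in> S \<rightarrow> S" using HS by blast
      then show ?thesis using brouwer[OF SS Sne cH] that by blast
    qed
    define w where "w = z' - ((T ^^ N) y - (twist \<omega> ^^ N) y)"
    have "H y = (fst w, snd w - real N * \<omega> (fst w))"
      unfolding H_def w_def[symmetric] by (simp add: Phinv_def twist_def)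
    then have yw: "y = (fst w, snd w - real N * \<omega> (fst w))" using Hy by simp
    have tw: "(twist \<omega> ^^ N) y = w" by (subst yw) (simp add: twist_pow)
    have TN: "(T ^^ N) y = z'" using w_def tw by (simp add: algebra_simps)
    show "\<exists>y\<in>cyl_ball (a, f a) \<delta>. (\<forall>k<N. fst ((Teps \<epsilon> ^^ k) y) \<in> {Im..Ip}) \<and> cyl_eq ((Teps \<epsilon> ^^ N) y) z"
    proof (intro bexI conjI allI impI)
      show "fst ((Teps \<epsilon> ^^ j) y) \<in> {Im..Ip}" if "j < N" for j using itS[OF yS] that by (simp add: T_def)
      show "cyl_eq ((Teps \<epsilon> ^^ N) y) z" using TN by (simp add: T_def cyl_eq_def z'_def)
      have 1: "dist (a, f a + of_int v) (b, f a + of_int v) \<le> s" using b by (simp add: dist_Pair_Pair dist_real_def)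
      have "(b, f a + of_int v) = Phinv (b, g b)" using gb by (simp add: Phinv_def twist_def)
      then have "dist (b, f a + of_int v) y0 = norm (Phinv (b, g b) - Phinv z')" by (simp add: y0_def dist_norm)
      also have "\<dots> \<le> P * norm ((b, g b) - z')" using bI interval z'S by (intro Plip) auto
      also have "\<dots> \<le> P * \<delta>'" using dz P2 by (intro mult_left_mono) (auto simp: dist_norm)
      finally have 2: "dist (b, f a + of_int v) y0 \<le> s/4" using d's2 by linarith
      have 3: "dist y0 y \<le> s/2" using yS by (simp add: S_def)
      have "dist (a, f a + of_int v) y \<le> dist (a, f a + of_int v) (b, f a + of_int v) + dist (b, f a + of_int v) y0 + dist y0 y"
        using dist_triangle[of "(a, f a + of_int v)" y "(b, f a + of_int v)"] dist_triangle[of "(b, f a + of_int v)" y y0] by linarith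
      then have 4: "dist (a, f a + of_int v) y < \<delta>" using 1 2 3 s0 sd by linarith
      have "dist (a, f a) (fst y, snd y + of_int (- v)) = dist (a, f a + of_int v) y"
        by (cases y) (simp add: dist_Pair_Pair dist_real_def algebra_simps)
      then have "cyl_dist (a, f a) y < \<delta>" using cyl_dist_le[of "(a, f a)" y "- v"] 4 by linarith
      then show "y \<in> cyl_ball (a, f a) \<delta>" by (simp add: cyl_ball_def)
    qed
    qed
  qed
  show ?thesis using main e00 e01 bI d'0 by blast
qed
end
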